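(* Let $K\in\{\mathbb R,\mathbb C,\mathbb H\}$ and let $(E,d)$ be a metric vector space over $K$ such that $d$ is $C_0$-translation invariant and $(C_1,C_2,C_3)$-lipschitz multiplicative. Let $d_0(x,y)=\int_{\mathbb U}d(ux,uy)\,d\mu(u)$, $\delta(x,y)=\lim_{n\to\infty}\frac1n d(nx,ny)$ and $\delta_0(x,y)=\lim_{n\to\infty}\frac1n d_0(nx,ny)$. Then $\delta$ and $\delta_0$ are $C_0$-translation invariant.
   Context: A metric vector space is a topological vector space over $K$ whose topology is generated by the metric $d$. $\mathbb U=\{u\in K:|u|=1\}$, $\mu$ the right-invariant Haar probability measure on $\mathbb U$. A function $\rho$ on $E\times E$ is $C_0$-translation invariant if $\rho(x+z,y+z)\le \rho(x,y)+C_0$ for all $x,y,z$. $(C_1,C_2,C_3)$-lipschitz multiplicative ($C_1\ge1$, $C_2,C_3\ge0$) means $C_1^{-1}|\lambda|d(x,y)-C_2|\lambda|-C_3\le d(\lambda x,\lambda y)\le C_1|\lambda|d(x,y)+C_2|\lambda|+C_3$ for all $\lambda\in K$, $x,y\in E$. (Under these hypotheses the limits defining $\delta,\delta_0$ exist.) *)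

theory Defs
  imports "HOL-Probability.Probability"
begin

definition left_module :: "('k::real_normed_div_algebra \<Rightarrow> 'e::ab_group_add \<Rightarrow> 'e) \<Rightarrow> bool" where
  "left_module sm \<longleftrightarrow>
     (\<forall>a x y. sm a (x + y) = sm a x + sm a y) \<and>
     (\<forall>a b x. sm (a + b) x = sm a x + sm b x) \<and>
     (\<forall>a b x. sm (a * b) x = sm a (sm b x)) \<and>
     (\<forall>x. sm 1 x = x)"

definition metric_vector_space :: "('k::real_normed_div_algebra \<Rightarrow> 'e::{ab_group_add,metric_space} \<Rightarrow> 'e) \<Rightarrow> bool" where
  "metric_vector_space sm \<longleftrightarrow> left_module sm \<and>
     continuous_on UNIV (\<lambda>p::'e \<times> 'e. fst p + snd p) \<and>
     continuous_on UNIV (\<lambda>p::'k \<times> 'e. sm (fst p) (snd p))"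

definition translation_invariant :: "real \<Rightarrow> ('e::plus \<Rightarrow> 'e \<Rightarrow> real) \<Rightarrow> bool" where
  "translation_invariant C0 \<rho> \<longleftrightarrow> (\<forall>x y z. \<rho> (x + z) (y + z) \<le> \<rho> x y + C0)"

definition lipschitz_multiplicative ::
  "('k::real_normed_div_algebra \<Rightarrow> 'e \<Rightarrow> 'e) \<Rightarrow> ('e \<Rightarrow> 'e \<Rightarrow> real) \<Rightarrow> real \<Rightarrow> real \<Rightarrow> real \<Rightarrow> bool" where
  "lipschitz_multiplicative sm d C1 C2 C3 \<longleftrightarrow> C1 \<ge> 1 \<and> C2 \<ge> 0 \<and> C3 \<ge> 0 \<and>
     (\<forall>c x y. inverse C1 * norm c * d x y - C2 * norm c - C3 \<le> d (sm c x) (sm c y) \<and>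
              d (sm c x) (sm c y) \<le> C1 * norm c * d x y + C2 * norm c + C3)"

definition unit_sphere :: "'k::real_normed_div_algebra set" where
  "unit_sphere = {u. norm u = 1}"

definition right_haar_prob :: "'k::real_normed_div_algebra measure \<Rightarrow> bool" where
  "right_haar_prob M \<longleftrightarrow> prob_space M \<and>
     space M = unit_sphere \<and> sets M = sets (restrict_space borel unit_sphere) \<and>
     (\<forall>v\<in>unit_sphere. distr M M (\<lambda>u. u * v) = M)"

definition averaged_metric :: "'k::real_normed_div_algebra measure \<Rightarrow> ('k \<Rightarrow> 'e \<Rightarrow> 'e) \<Rightarrow> ('e \<Rightarrow> 'e \<Rightarrow> real) \<Rightarrow> 'e \<Rightarrow> 'e \<Rightarrow> real" where
  "averaged_metric M sm d x y = (\<integral>u. d (sm u x) (sm u y) \<partial>M)"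

definition asymptotic :: "('k::real_normed_div_algebra \<Rightarrow> 'e \<Rightarrow> 'e) \<Rightarrow> ('e \<Rightarrow> 'e \<Rightarrow> real) \<Rightarrow> 'e \<Rightarrow> 'e \<Rightarrow> real" where
  "asymptotic sm \<rho> x y = lim (\<lambda>n::nat. \<rho> (sm (of_nat n) x) (sm (of_nat n) y) / real n)"

end

theory Submission
  imports Defs
begin

lemma lim_eq_diff:
  fixes a b :: "nat \<Rightarrow> real"
  assumes "(\<lambda>n. a n - b n) \<longlonglongrightarrow> 0"
  shows "lim a = lim b"
proof -
  have "\<And>L. (a \<longlonglongrightarrow> L) = (b \<longlonglongrightarrow> L)"
  proof
    fix L assume "a \<longlonglongrightarrow> L"
    from tendsto_diff[OF this assms] show "b \<longlonglongrightarrow> L" by simp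
  next
    fix L assume "b \<longlonglongrightarrow> L"
    from tendsto_add[OF this assms] show "a \<longlonglongrightarrow> L" by simp
  qed
  then show ?thesis unfolding lim_def by simp
qed

lemma ti_nonneg: "translation_invariant C0 (\<rho>::'a::monoid_add \<Rightarrow> _) \<Longrightarrow> C0 \<ge> (0::real)"
  unfolding translation_invariant_def
proof -
  assume "\<forall>x y z. \<rho> (x + z) (y + z) \<le> \<rho> x y + C0"
  then have "\<rho> (undefined + 0) (undefined + 0) \<le> \<rho> undefined undefined + C0" by blast
  then show "C0 \<ge> 0" by simp
qed

lemma ti_asym:
  fixes sm :: "'k::real_normed_div_algebra \<Rightarrow> 'e::ab_group_add \<Rightarrow> 'e"
  assumes ti: "translation_invariant C0 \<rho>"
    and add: "\<And>c a b. sm c (a + b) = sm c a + sm c b"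
  shows "translation_invariant C0 (asymptotic sm \<rho>)"
  unfolding translation_invariant_def
proof (intro allI)
  fix x y z
  have C0: "C0 \<ge> 0" using ti_nonneg[OF ti] .
  have ti': "\<And>p q r. \<rho> (p + r) (q + r) \<le> \<rho> p q + C0"
    using ti unfolding translation_invariant_def by blast
  define a where "a = (\<lambda>n::nat. \<rho> (sm (of_nat n) (x+z)) (sm (of_nat n) (y+z)) / real n)"
  define b where "b = (\<lambda>n::nat. \<rho> (sm (of_nat n) x) (sm (of_nat n) y) / real n)"
  have "(\<lambda>n. a n - b n) \<longlonglongrightarrow> 0"
  proof (rule Lim_null_comparison)
    show "(\<lambda>n. C0 / of_nat n) \<longlonglongrightarrow> 0" by (rule lim_const_over_n)
    show "\<forall>\<^sub>F n in sequentially. norm (a n - b n) \<le> C0 / real n"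
    proof (rule eventuallyI)
      fix n :: nat
      show "norm (a n - b n) \<le> C0 / real n"
      proof (cases "n = 0")
        case True then show ?thesis by (simp add: a_def b_def)
      next
        case False
        let ?P = "sm (of_nat n) x" and ?Q = "sm (of_nat n) y" and ?R = "sm (of_nat n) z"
        have e1: "\<rho> (?P + ?R) (?Q + ?R) \<le> \<rho> ?P ?Q + C0" by (rule ti')
        have e2: "\<rho> ?P ?Q \<le> \<rho> (?P + ?R) (?Q + ?R) + C0"
          using ti'[of "?P + ?R" "- ?R" "?Q + ?R"] by simp
        have "\<bar>\<rho> (?P + ?R) (?Q + ?R) - \<rho> ?P ?Q\<bar> \<le> C0" using e1 e2 by linarith
        then have "\<bar>\<rho> (?P + ?R) (?Q + ?R) - \<rho> ?P ?Q\<bar> / real n \<le> C0 / real n"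
          using False by (simp add: divide_right_mono)
        moreover have "a n - b n = (\<rho> (?P + ?R) (?Q + ?R) - \<rho> ?P ?Q) / real n"
          by (simp add: a_def b_def add diff_divide_distrib)
        ultimately show ?thesis by (simp only: real_norm_def abs_divide)
      qed
    qed
  qed
  then have "lim a = lim b" by (rule lim_eq_diff)
  then have "asymptotic sm \<rho> (x + z) (y + z) = asymptotic sm \<rho> x y"
    unfolding asymptotic_def a_def b_def .
  then show "asymptotic sm \<rho> (x + z) (y + z) \<le> asymptotic sm \<rho> x y + C0" using C0 by simp
qed

theorem lemma3:
  fixes sm :: "'k::real_normed_div_algebra \<Rightarrow> 'e::{ab_group_add,metric_space} \<Rightarrow> 'e"
    and M :: "'k measure"
    and C0 C1 C2 C3 :: real
  assumes "metric_vector_space sm"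
    and "translation_invariant C0 (dist :: 'e \<Rightarrow> 'e \<Rightarrow> real)"
    and "lipschitz_multiplicative sm dist C1 C2 C3"
    and "right_haar_prob M"
  shows "translation_invariant C0 (asymptotic sm dist)
     \<and> translation_invariant C0 (asymptotic sm (averaged_metric M sm dist))"
proof -
  have add: "\<And>c a b. sm c (a + b) = sm c a + sm c b"
    using assms(1) unfolding metric_vector_space_def left_module_def by blast
  have ti: "\<And>p q r::'e. dist (p + r) (q + r) \<le> dist p q + C0"
    using assms(2) unfolding translation_invariant_def by blast
  have P: "prob_space M" and sp: "space M = unit_sphere"
    and ss: "sets M = sets (restrict_space borel unit_sphere)"
    using assms(4) unfolding right_haar_prob_def by auto
  interpret prob_space M by (rule P)
  have cont: "continuous_on UNIV (\<lambda>p::'k \<times> 'e. sm (fst p) (snd p))"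
    using assms(1) unfolding metric_vector_space_def by blast
  have lip: "\<And>c p q. dist (sm c p) (sm c q) \<le> C1 * norm c * dist p q + C2 * norm c + C3"
    using assms(3) unfolding lipschitz_multiplicative_def by blast
  have int: "integrable M (\<lambda>u. dist (sm u p) (sm u q))" for p q
  proof (rule integrable_const_bound)
    have c1: "continuous_on UNIV (\<lambda>u. sm u p)" for p
    proof -
      have "continuous_on UNIV ((\<lambda>p::'k \<times> 'e. sm (fst p) (snd p)) \<circ> (\<lambda>u. (u, p)))"
        by (rule continuous_on_compose) (auto intro!: continuous_intros cont[THEN continuous_on_subset])
      then show ?thesis by (simp add: o_def)
    qed
    have "(\<lambda>u. dist (sm u p) (sm u q)) \<in> borel_measurable borel"
      by (rule borel_measurable_continuous_onI) (intro continuous_intros c1)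
    then have "(\<lambda>u. dist (sm u p) (sm u q)) \<in> borel_measurable (restrict_space borel unit_sphere)"
      by (rule measurable_restrict_space1)
    then show "(\<lambda>u. dist (sm u p) (sm u q)) \<in> borel_measurable M"
      unfolding measurable_cong_sets[OF ss refl] .
    show "AE u in M. norm (dist (sm u p) (sm u q)) \<le> C1 * dist p q + C2 + C3"
    proof (rule AE_I2)
      fix u assume "u \<in> space M"
      then have "norm u = 1" using sp unfolding unit_sphere_def by simp
      then show "norm (dist (sm u p) (sm u q)) \<le> C1 * dist p q + C2 + C3"
        using lip[of u p q] by simp
    qed
  qed
  have ti0: "translation_invariant C0 (averaged_metric M sm dist)"
    unfolding translation_invariant_def averaged_metric_def
  proof (intro allI)
    fix x y z
    have "(\<integral>u. dist (sm u (x + z)) (sm u (y + z)) \<partial>M) \<le> (\<integral>u. dist (sm u x) (sm u y) + C0 \<partial>M)"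
      by (rule integral_mono) (use int[of "x+z" "y+z"] int[of x y] ti in \<open>auto simp: add\<close>)
    also have "\<dots> = (\<integral>u. dist (sm u x) (sm u y) \<partial>M) + C0"
      using int by (simp add: prob_space)
    finally show "(\<integral>u. dist (sm u (x + z)) (sm u (y + z)) \<partial>M) \<le> (\<integral>u. dist (sm u x) (sm u y) \<partial>M) + C0" .
  qed
  have A: "\<forall>c a b. sm c (a + b) = sm c a + sm c b" using add by blast
  show ?thesis using ti_asym[of C0 dist sm] ti_asym[of C0 "averaged_metric M sm dist" sm] assms(2) ti0 A by blast
qed

end
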